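(* Let $n_x,n_y,n_z$ be pairwise relatively prime positive integers and let $K$ and $K'$ be Lissajous knots with frequencies $(n_x,n_y,n_z)$, $\phi_x=0$, whose phase shift pairs $(\phi_y,\phi_z)$ and $(\phi_y',\phi_z')$ belong to regions of the phase torus separated by $2n_y$ singular lines of the form $\phi_z=\frac{n_z}{n_y}\phi_y+l\frac{\pi}{n_y}$ ($l\in\mathbb{Z}$) (i.e., one region is reached from the other by successively crossing $2n_y$ consecutive such lines). Then all Type I crossings are the same (have the same over/under information) for both knots.
   Context: A Lissajous knot with frequencies $(n_x,n_y,n_z)$ (pairwise relatively prime integers) and phase shifts $(\phi_x,\phi_y,\phi_z)$ is the curve $K(t)=(\cos(n_xt+\phi_x),\cos(n_yt+\phi_y),\cos(n_zt+\phi_z))$, $0\le t\le2\pi$, when it is embedded. Take $\phi_x=0$. The phase torus is the torus of pairs $(\phi_y,\phi_z)\in[0,2\pi]\times[0,2\pi]$; the curve fails to be embedded exactly on the singular lines $\phi_z=\frac{n_z}{n_y}\phi_y+l\frac{\pi}{n_y}$, $\phi_z=l\frac{\pi}{n_x}$, $\phi_y=l\frac{\pi}{n_x}$ ($l\in\mathbb{Z}$), and the regions are the connected components of the complement of these lines. The Type I crossings of the projection of $K$ to the $xy$-plane are the double points given by parameter pairs $(t_1,t_2)=\big((-\frac{k}{n_x}+\frac{j}{n_y})\pi-\frac{\phi_y}{n_y},(\frac{k}{n_x}+\frac{j}{n_y})\pi-\frac{\phi_y}{n_y}\big)$ with $1\le k\le n_x-1$ and integers $j$ with $1+\lfloor \frac{n_y}{n_x}k+\frac{\phi_y}{\pi}\rfloor\le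 j\le \lfloor 2n_y-\frac{n_y}{n_x}k+\frac{\phi_y}{\pi}\rfloor$; $(k,j)$ are the parameters of the crossing. *)

theory Defs
  imports "HOL-Analysis.Analysis"
begin

definition lissajous :: "nat \<Rightarrow> nat \<Rightarrow> nat \<Rightarrow> real \<Rightarrow> real \<Rightarrow> real \<Rightarrow> real \<times> real \<times> real" where
  "lissajous nx ny nz py pz t =
     (cos (real nx * t), cos (real ny * t + py), cos (real nz * t + pz))"

definition on_slanted_line :: "nat \<Rightarrow> nat \<Rightarrow> real \<times> real \<Rightarrow> bool" where
  "on_slanted_line ny nz p \<longleftrightarrow>
     (\<exists>l::int. snd p = real nz / real ny * fst p + real_of_int l * pi / real ny)"

definition on_axis_line :: "nat \<Rightarrow> real \<times> real \<Rightarrow> bool" where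
  "on_axis_line nx p \<longleftrightarrow>
     (\<exists>l::int. snd p = real_of_int l * pi / real nx) \<or> (\<exists>l::int. fst p = real_of_int l * pi / real nx)"

definition singular_phase :: "nat \<Rightarrow> nat \<Rightarrow> nat \<Rightarrow> real \<times> real \<Rightarrow> bool" where
  "singular_phase nx ny nz p \<longleftrightarrow> on_slanted_line ny nz p \<or> on_axis_line nx p"

text \<open>Phase torus [0,2pi] x [0,2pi]; its boundary consists of singular lines, so the regions
  (components of the complement of all singular lines) are components of this open set.\<close>
definition phase_torus :: "(real \<times> real) set" where
  "phase_torus = {0..2*pi} \<times> {0..2*pi}"

definition regular_phases :: "nat \<Rightarrow> nat \<Rightarrow> nat \<Rightarrow> (real \<times> real) set" where
  "regular_phases nx ny nz = {p \<in> phase_torus. \<not> singular_phase nx ny nz p}"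

definition region :: "nat \<Rightarrow> nat \<Rightarrow> nat \<Rightarrow> real \<times> real \<Rightarrow> (real \<times> real) set" where
  "region nx ny nz p = connected_component_set (regular_phases nx ny nz) p"

text \<open>Complement of the non-slanted singular lines only: moving inside one component of this
  set, only slanted lines \<open>phi_z = nz/ny phi_y + l pi/ny\<close> are crossed.\<close>
definition box_phases :: "nat \<Rightarrow> (real \<times> real) set" where
  "box_phases nx = {p \<in> phase_torus. \<not> on_axis_line nx p}"

definition slanted_index :: "nat \<Rightarrow> nat \<Rightarrow> real \<times> real \<Rightarrow> int \<Rightarrow> bool" where
  "slanted_index ny nz p l \<longleftrightarrow>
     real_of_int l * pi / real ny < snd p - real nz / real ny * fst p \<and>
     snd p - real nz / real ny * fst p < real_of_int (l + 1) * pi / real ny"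

definition typeI_params :: "nat \<Rightarrow> nat \<Rightarrow> real \<Rightarrow> (nat \<times> int) set" where
  "typeI_params nx ny py =
     {(k, j). 1 \<le> k \<and> k \<le> nx - 1 \<and>
        1 + \<lfloor>real ny / real nx * real k + py / pi\<rfloor> \<le> j \<and>
        j \<le> \<lfloor>2 * real ny - real ny / real nx * real k + py / pi\<rfloor>}"

definition typeI_t1 :: "nat \<Rightarrow> nat \<Rightarrow> real \<Rightarrow> nat \<Rightarrow> int \<Rightarrow> real" where
  "typeI_t1 nx ny py k j = (- real k / real nx + real_of_int j / real ny) * pi - py / real ny"

definition typeI_t2 :: "nat \<Rightarrow> nat \<Rightarrow> real \<Rightarrow> nat \<Rightarrow> int \<Rightarrow> real" where
  "typeI_t2 nx ny py k j = (real k / real nx + real_of_int j / real ny) * pi - py / real ny"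

definition typeI_over :: "nat \<Rightarrow> nat \<Rightarrow> nat \<Rightarrow> real \<Rightarrow> real \<Rightarrow> nat \<Rightarrow> int \<Rightarrow> bool" where
  "typeI_over nx ny nz py pz k j \<longleftrightarrow>
     snd (snd (lissajous nx ny nz py pz (typeI_t1 nx ny py k j)))
       > snd (snd (lissajous nx ny nz py pz (typeI_t2 nx ny py k j)))"

end

theory Submission
  imports Defs
begin
lemma sin_sign:
  fixes M :: int and x y :: real
  assumes "M*pi < x" "x < (M+1)*pi" "M*pi < y" "y < (M+1)*pi"
  shows "sin x * sin y > 0"
proof -
  have s0: "sin (M*pi) = 0" using sin_zero_iff_int2 by blast
  have c: "cos (M*pi) * cos (M*pi) = 1" using sin_cos_squared_add[of "M*pi"] s0 by (simp add: power2_eq_square)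
  have ex: "sin x = sin (x - M*pi) * cos (M*pi)" using sin_add[of "x - M*pi" "M*pi"] s0 by simp
  have ey: "sin y = sin (y - M*pi) * cos (M*pi)" using sin_add[of "y - M*pi" "M*pi"] s0 by simp
  have "sin (x - M*pi) > 0" by (rule sin_gt_zero) (use assms in \<open>auto simp: algebra_simps\<close>)
  moreover have "sin (y - M*pi) > 0" by (rule sin_gt_zero) (use assms in \<open>auto simp: algebra_simps\<close>)
  ultimately show ?thesis unfolding ex ey using c
    by (metis mult.commute mult.left_commute mult_pos_pos mult.right_neutral)
qed

lemma floor_same:
  fixes u v :: real and a :: int and nx :: nat
  assumes "nx > 0" "\<And>p. min u v \<le> p \<Longrightarrow> p \<le> max u v \<Longrightarrow> \<not>(\<exists>l::int. p = l*pi/nx)"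
  shows "\<lfloor>a/nx + u/pi\<rfloor> = \<lfloor>a/nx + v/pi\<rfloor>"
proof -
  have key: "\<lfloor>a/nx + u/pi\<rfloor> = \<lfloor>a/nx + v/pi\<rfloor>" if "u \<le> v"
       "\<And>p. u \<le> p \<Longrightarrow> p \<le> v \<Longrightarrow> \<not>(\<exists>l::int. p = l*pi/nx)" for u v
  proof (rule ccontr)
    assume ne: "\<lfloor>a/nx + u/pi\<rfloor> \<noteq> \<lfloor>a/nx + v/pi\<rfloor>"
    have le: "\<lfloor>a/nx + u/pi\<rfloor> \<le> \<lfloor>a/nx + v/pi\<rfloor>" using that(1) by (intro floor_mono) (simp add: divide_right_mono)
    define m where "m = \<lfloor>a/nx + v/pi\<rfloor>"
    have m1: "a/nx + u/pi < m" using ne le unfolding m_def by linarith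
    have m2: "m \<le> a/nx + v/pi" unfolding m_def by simp
    define p where "p = (m - a/nx)*pi"
    have "u < p" using m1 pi_gt_zero unfolding p_def by (simp add: field_simps)
    moreover have "p \<le> v" using m2 pi_gt_zero unfolding p_def by (simp add: field_simps)
    moreover have "p = real_of_int (m*nx - a)*pi/nx" unfolding p_def using assms(1) by (simp add: field_simps)
    ultimately show False using that(2)[of p] by (metis less_imp_le)
  qed
  show ?thesis
  proof (cases "u \<le> v")
    case True thus ?thesis using key[of u v] assms(2) by (simp add: min_def max_def)
  next
    case False thus ?thesis using key[of v u] assms(2) by (simp add: min_def max_def)
  qed
qed

lemma over_iff:
  assumes "nx > 0" "ny > 0"
  shows "typeI_over nx ny nz py pz k j \<longleftrightarrow>
    sin (real nz * real_of_int j * pi / real ny + (pz - real nz / real ny * py)) * sin (real nz * real k * pi / real nx) > 0"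
proof -
  define X where "X = real nz * real_of_int j * pi / real ny + (pz - real nz / real ny * py)"
  define Y where "Y = real nz * real k * pi / real nx"
  have e1: "real nz * typeI_t1 nx ny py k j + pz = X - Y"
    unfolding typeI_t1_def X_def Y_def using assms by (simp add: field_simps)
  have e2: "real nz * typeI_t2 nx ny py k j + pz = X + Y"
    unfolding typeI_t2_def X_def Y_def using assms by (simp add: field_simps)
  have "typeI_over nx ny nz py pz k j \<longleftrightarrow> cos (X - Y) > cos (X + Y)"
    unfolding typeI_over_def lissajous_def using e1 e2 by simp
  also have "\<dots> \<longleftrightarrow> sin X * sin Y > 0" by (simp add: cos_diff cos_add)
  finally show ?thesis unfolding X_def Y_def .
qed

lemma sin_interval:
  fixes N :: int and ny :: nat and x y :: real
  assumes "ny > 0" "N*pi/ny < x" "x < (N+1)*pi/ny" "N*pi/ny < y" "y < (N+1)*pi/ny"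
  shows "sin x * sin y > 0"
proof -
  define M where "M = N div int ny"
  have d: "M * int ny + N mod int ny = N" unfolding M_def by (rule div_mult_mod_eq)
  have r: "0 \<le> N mod int ny" "N mod int ny < int ny" using assms(1) by simp_all
  have a: "M * int ny \<le> N" "N + 1 \<le> (M+1) * int ny" using d r by (simp_all add: algebra_simps)
  have b: "real_of_int M * real ny \<le> real_of_int N" "real_of_int N + 1 \<le> (real_of_int M + 1) * real ny"
    using of_int_le_iff[where 'a=real, THEN iffD2, OF a(1)] of_int_le_iff[where 'a=real, THEN iffD2, OF a(2)] by simp_all
  have c1: "M*pi \<le> N*pi/ny" using b(1) assms(1) pi_gt_zero by (simp add: field_simps)
  have c2': "(real_of_int N + 1)*pi \<le> ((real_of_int M + 1)*real ny)*pi" using b(2) pi_gt_zero by (intro mult_right_mono) auto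
  have c2: "(N+1)*pi/ny \<le> (M+1)*pi" using c2' assms(1) by (simp add: pos_divide_le_eq algebra_simps)
  show ?thesis by (rule sin_sign[of M]) (use assms c1 c2 in auto)
qed
theorem corollary1:
  fixes nx ny nz :: nat and py pz py' pz' :: real
  assumes "0 < nx" "0 < ny" "0 < nz"
    and "coprime nx ny" "coprime nx nz" "coprime ny nz"
    and "(py, pz) \<in> regular_phases nx ny nz"
    and "(py', pz') \<in> regular_phases nx ny nz"
    and "(py', pz') \<in> connected_component_set (box_phases nx) (py, pz)"
    and "slanted_index ny nz (py, pz) l" and "slanted_index ny nz (py', pz') l'"
    and "\<bar>l' - l\<bar> = 2 * int ny"
  shows "typeI_params nx ny py' = typeI_params nx ny py \<and>
    (\<forall>(k, j) \<in> typeI_params nx ny py.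
       typeI_over nx ny nz py' pz' k j = typeI_over nx ny nz py pz k j)"
proof -
  have nx0: "real nx > 0" and ny0: "real ny > 0" using assms(1,2) by auto
  obtain T where T: "connected T" "T \<subseteq> box_phases nx" "(py, pz) \<in> T" "(py', pz') \<in> T"
    using assms(9) unfolding connected_component_def by auto
  have cT: "connected (fst ` T)"
    using T(1) by (intro connected_continuous_image continuous_intros)
  have noax: "\<not>(\<exists>l::int. p = l*pi/nx)" if "min py py' \<le> p" "p \<le> max py py'" for p
  proof -
    have i: "\<forall>x\<in>fst ` T. \<forall>y\<in>fst ` T. \<forall>z. x \<le> z \<longrightarrow> z \<le> y \<longrightarrow> z \<in> fst ` T"
      using cT connected_iff_interval by blast
    have m1: "py \<in> fst ` T" using T(3) by force
    have m2: "py' \<in> fst ` T" using T(4) by force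
    have "p \<in> fst ` T"
    proof (cases "py \<le> py'")
      case True
      then have "py \<le> p" "p \<le> py'" using that by auto
      then show ?thesis using i m1 m2 by blast
    next
      case False
      then have "py' \<le> p" "p \<le> py" using that by auto
      then show ?thesis using i m1 m2 by blast
    qed
    then obtain q where "(p, q) \<in> T" by force
    then have "(p, q) \<in> box_phases nx" using T(2) by auto
    then show ?thesis unfolding box_phases_def on_axis_line_def by auto
  qed
  have fl: "\<lfloor>real_of_int a / real nx + py / pi\<rfloor> = \<lfloor>real_of_int a / real nx + py' / pi\<rfloor>" for a
    by (rule floor_same) (use assms(1) noax in auto)
  have e1: "real ny / real nx * real k = real_of_int (int (ny*k)) / real nx" for k by simp
  have e2: "2 * real ny - real ny / real nx * real k = real_of_int (int (2*ny*nx) - int (ny*k)) / real nx" for k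
    using nx0 by (simp add: field_simps)
  have P: "typeI_params nx ny py' = typeI_params nx ny py"
  proof -
    have f1: "\<lfloor>real ny / real nx * real k + py' / pi\<rfloor> = \<lfloor>real ny / real nx * real k + py / pi\<rfloor>" for k
      unfolding e1 by (rule fl[symmetric])
    have f2: "\<lfloor>2 * real ny - real ny / real nx * real k + py' / pi\<rfloor> = \<lfloor>2 * real ny - real ny / real nx * real k + py / pi\<rfloor>" for k
      unfolding e2 by (rule fl[symmetric])
    show ?thesis unfolding typeI_params_def by (simp only: f1 f2)
  qed
  have O: "typeI_over nx ny nz py' pz' k j = typeI_over nx ny nz py pz k j" for k j
  proof -
    define X where "X = real nz * real_of_int j * pi / real ny + (pz - real nz / real ny * py)"
    define X' where "X' = real nz * real_of_int j * pi / real ny + (pz' - real nz / real ny * py')"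
    define Y where "Y = real nz * real k * pi / real nx"
    define c where "c = pz - real nz / real ny * py"
    define c' where "c' = pz' - real nz / real ny * py'"
    have c: "real_of_int l * pi / real ny < c" "c < real_of_int (l + 1) * pi / real ny"
      using assms(10) unfolding slanted_index_def c_def by auto
    have c': "real_of_int l' * pi / real ny < c'" "c' < real_of_int (l' + 1) * pi / real ny"
      using assms(11) unfolding slanted_index_def c'_def by auto
    obtain s :: real where s: "s = 2*pi \<or> s = -2*pi" and ls: "real_of_int l' * pi / real ny = real_of_int l * pi / real ny + s"
    proof (cases "l' - l \<ge> 0")
      case True
      then have "l' = l + 2 * int ny" using assms(12) by auto
      then have L: "real_of_int l' = real_of_int l + 2 * real ny" by simp
      have "real_of_int l' * pi / real ny = real_of_int l * pi / real ny + 2*pi" unfolding L using ny0 by (simp add: field_simps)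
      then show ?thesis using that by auto
    next
      case False
      then have "l' = l - 2 * int ny" using assms(12) by auto
      then have L: "real_of_int l' = real_of_int l - 2 * real ny" by simp
      have "real_of_int l' * pi / real ny = real_of_int l * pi / real ny + (-2*pi)" unfolding L using ny0 by (simp add: field_simps)
      then show ?thesis using that by auto
    qed
    have sX': "sin X' = sin (X' - s)"
      using s by (auto simp: sin_periodic[of "X' - 2*pi", simplified] sin_periodic[of X', symmetric] )
    define N where "N = l + int nz * j"
    have base: "real_of_int N * pi / real ny = real_of_int l * pi / real ny + real nz * real_of_int j * pi / real ny"
      unfolding N_def using ny0 by (simp add: field_simps)
    have base1: "real_of_int (N+1) * pi / real ny = real_of_int (l+1) * pi / real ny + real nz * real_of_int j * pi / real ny"
      unfolding N_def using ny0 by (simp add: field_simps)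
    have l1: "real_of_int (l' + 1) * pi / real ny = real_of_int (l + 1) * pi / real ny + s"
      using ls ny0 by (simp add: field_simps)
    have "sin X * sin (X' - s) > 0"
    proof -
      have X: "X = real nz * real_of_int j * pi / real ny + c" by (simp add: X_def c_def)
      have X': "X' - s = real nz * real_of_int j * pi / real ny + (c' - s)" by (simp add: X'_def c'_def)
      have g1: "real_of_int N * pi / real ny < X" unfolding base X using c(1) by linarith
      have g2: "X < real_of_int (N+1) * pi / real ny" unfolding base1 X using c(2) by linarith
      have g3: "real_of_int N * pi / real ny < X' - s" unfolding base X' using c'(1) ls by linarith
      have g4: "X' - s < real_of_int (N+1) * pi / real ny" unfolding base1 X' using c'(2) l1 by linarith
      show ?thesis by (rule sin_interval[OF assms(2) g1 g2 g3 g4])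
    qed
    then have XX: "sin X * sin X' > 0" using sX' by simp
    have "typeI_over nx ny nz py' pz' k j \<longleftrightarrow> sin X' * sin Y > 0"
      unfolding X'_def Y_def by (rule over_iff[OF assms(1,2)])
    moreover have "typeI_over nx ny nz py pz k j \<longleftrightarrow> sin X * sin Y > 0"
      unfolding X_def Y_def by (rule over_iff[OF assms(1,2)])
    ultimately show ?thesis using XX by (auto simp: zero_less_mult_iff)
  qed
  show ?thesis using P O by auto
qed

end
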